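(* Let $\lambda=[\lambda_1,\ldots,\lambda_s]$ and $\mu=[\mu_1,\ldots,\mu_t]$ be integral partitions such that $\lambda_i\mid\lambda_j$ whenever $i\ge j$. Suppose $\lambda\hookrightarrow\mu$. Then the first fit procedure always succeeds: if one processes $\lambda_1,\lambda_2,\ldots,\lambda_s$ in this order and places each $\lambda_i$ into any bin $j$ whose remaining capacity (namely $\mu_j$ minus the sum of the $\lambda$'s already placed in bin $j$) is at least $\lambda_i$, then, whatever such choices are made, at each step there exists a bin with remaining capacity at least the current $\lambda_i$, so all of $\lambda$ gets placed. Equivalently: for every $k$ with $\lambda_1\le\mu_k$, the sequence $[\lambda_2,\ldots,\lambda_s]$ embeds into the sequence of capacities obtained from $\mu$ by replacing $\mu_k$ with $\mu_k-\lambda_1$.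
   Context: An integral partition is a finite nonincreasing sequence of positive integers. $\lambda=[\lambda_1,\ldots,\lambda_m]$ embeds into a sequence of nonnegative integer capacities $\mu=[\mu_1,\ldots,\mu_n]$, written $\lambda\hookrightarrow\mu$, if there is a map $\varphi:\{1,\ldots,m\}\to\{1,\ldots,n\}$ with $\sum_{i\in\varphi^{-1}(j)}\lambda_i\le\mu_j$ for all $j$. *)

theory Defs
  imports Main
begin

text \<open>Integral partitions are lists of positive naturals, nonincreasing. Indices are 0-based.\<close>
definition integral_partition :: "nat list \<Rightarrow> bool" where
  "integral_partition xs \<longleftrightarrow> (\<forall>x\<in>set xs. 0 < x) \<and> sorted_wrt (\<ge>) xs"

definition load :: "nat list \<Rightarrow> (nat \<Rightarrow> nat) \<Rightarrow> nat \<Rightarrow> nat \<Rightarrow> nat" where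
  "load lam phi n j = (\<Sum>i | i < n \<and> phi i = j. lam ! i)"

definition embeds :: "nat list \<Rightarrow> nat list \<Rightarrow> bool" where
  "embeds lam mu \<longleftrightarrow> (\<exists>phi. (\<forall>i < length lam. phi i < length mu) \<and>
      (\<forall>j < length mu. load lam phi (length lam) j \<le> mu ! j))"

definition first_fit_run :: "nat list \<Rightarrow> nat list \<Rightarrow> (nat \<Rightarrow> nat) \<Rightarrow> nat \<Rightarrow> bool" where
  "first_fit_run lam mu phi n \<longleftrightarrow> (\<forall>l < n. phi l < length mu \<and>
      lam ! l + load lam phi l (phi l) \<le> mu ! (phi l))"

end

theory Submission
  imports Defs
begin

definition dchain :: "nat list \<Rightarrow> bool" where
  "dchain lam \<longleftrightarrow> (\<forall>i j. i < length lam \<longrightarrow> j \<le> i \<longrightarrow> lam ! i dvd lam ! j)"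

lemma subset_sum:
  assumes "dchain lam" "finite B" "B \<subseteq> {..<length lam}" "\<forall>i\<in>B. lam ! i dvd D"
    "D \<le> sum (nth lam) B"
  shows "\<exists>S\<subseteq>B. sum (nth lam) S = D"
  using assms(2-5)
proof (induction B rule: finite_linorder_max_induct)
  case empty
  then show ?case by auto
next
  case (insert x F)
  show ?case
  proof (cases "D \<le> sum (nth lam) F")
    case True
    with insert obtain S where "S \<subseteq> F" "sum (nth lam) S = D" by auto
    then show ?thesis by blast
  next
    case False
    have hx: "x < length lam" using insert by auto
    have "\<forall>y\<in>F. lam ! x dvd lam ! y"
    proof
      fix y assume "y \<in> F"
      with insert have "y < x" by auto
      then show "lam ! x dvd lam ! y" using hx assms(1) unfolding dchain_def by auto
    qed
    then have d1: "lam ! x dvd sum (nth lam) F" by (simp add: dvd_sum)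
    have d2: "lam ! x dvd D" using insert by auto
    have s: "sum (nth lam) (insert x F) = lam ! x + sum (nth lam) F"
    proof -
      have "x \<notin> F" using insert by auto
      then show ?thesis using insert by simp
    qed
    obtain q where q: "D = lam ! x * q" using d2 by blast
    obtain r where r: "sum (nth lam) F = lam ! x * r" using d1 by blast
    have "r < q" using False q r
      by (metis mult_le_mono2 not_le_imp_less)
    moreover have "q \<le> Suc r"
    proof -
      have "lam ! x * q \<le> lam ! x * Suc r" using insert.prems(3) s q r by (simp add: algebra_simps)
      moreover have "lam ! x > 0" using False insert.prems(3) s q r
        by (metis add_0 gr0I)
      ultimately show ?thesis using mult_le_cancel1 by blast
    qed
    ultimately have "q = Suc r" by simp
    then have "sum (nth lam) (insert x F) = D" using s q r by simp
    then show ?thesis by blast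
  qed
qed

definition wsum :: "nat list \<Rightarrow> (nat \<Rightarrow> nat) \<Rightarrow> nat \<Rightarrow> nat" where
  "wsum lam g j = (\<Sum>i | 0 < i \<and> i < length lam \<and> g i = j. lam ! i)"

lemma load_tl:
  "load (tl lam) (\<lambda>i. g (Suc i)) (length (tl lam)) j = wsum lam g j"
  unfolding load_def wsum_def
  apply (rule sum.reindex_bij_witness[where j = Suc and i = "\<lambda>b. b - 1"])
  apply (auto simp: nth_tl)
  done

lemma tl_embeds:
  assumes "\<forall>i. 0 < i \<and> i < length lam \<longrightarrow> g i < length mu'"
    "\<forall>j<length mu'. wsum lam g j \<le> mu' ! j"
  shows "embeds (tl lam) mu'"
  unfolding embeds_def
  apply (rule exI[of _ "\<lambda>i. g (Suc i)"])
  using assms load_tl[of lam g] by auto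

lemma load_split:
  assumes "lam \<noteq> []"
  shows "load lam phi (length lam) j = wsum lam phi j + (if phi 0 = j then lam ! 0 else 0)"
proof -
  have fin: "finite {i. 0 < i \<and> i < length lam \<and> phi i = j}" by simp
  show ?thesis
  proof (cases "phi 0 = j")
    case True
    then have "{i. i < length lam \<and> phi i = j} = insert 0 {i. 0 < i \<and> i < length lam \<and> phi i = j}"
      using assms by auto
    then show ?thesis unfolding load_def wsum_def using True fin by simp
  next
    case False
    then have "{i. i < length lam \<and> phi i = j} = {i. 0 < i \<and> i < length lam \<and> phi i = j}"
      using assms by (auto intro: gr0I)
    then show ?thesis unfolding load_def wsum_def using False by simp
  qed
qed

lemma keylemma:
  assumes ch: "dchain lam" and ne: "lam \<noteq> []" and em: "embeds lam mu"
    and k: "k < length mu" and le: "lam ! 0 \<le> mu ! k"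
  shows "embeds (tl lam) (mu[k := mu ! k - lam ! 0])"
proof -
  obtain phi where ph1: "\<forall>i < length lam. phi i < length mu"
    and ph2: "\<forall>j < length mu. load lam phi (length lam) j \<le> mu ! j"
    using em unfolding embeds_def by blast
  define p where "p = phi 0"
  have p: "p < length mu" using ph1 ne unfolding p_def by auto
  have L: "wsum lam phi j + (if p = j then lam ! 0 else 0) \<le> mu ! j" if "j < length mu" for j
  proof -
    have "load lam phi (length lam) j \<le> mu ! j" using ph2 that by blast
    then show ?thesis using load_split[OF ne, of phi j] unfolding p_def by simp
  qed
  show ?thesis
  proof (cases "p = k")
    case True
    show ?thesis
    proof (rule tl_embeds)
      show "\<forall>i. 0 < i \<and> i < length lam \<longrightarrow> phi i < length (mu[k := mu ! k - lam ! 0])"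
        using ph1 by auto
      show "\<forall>j<length (mu[k := mu ! k - lam ! 0]). wsum lam phi j \<le> mu[k := mu ! k - lam ! 0] ! j"
      proof (intro allI impI)
        fix j assume "j < length (mu[k := mu ! k - lam ! 0])"
        then have j: "j < length mu" by simp
        show "wsum lam phi j \<le> mu[k := mu ! k - lam ! 0] ! j"
          using L[OF j] True j by (cases "j = k") auto
      qed
    qed
  next
    case pk: False
    define B where "B = {i. 0 < i \<and> i < length lam \<and> phi i = k}"
    have finB: "finite B" unfolding B_def by simp
    have sB: "sum (nth lam) B = wsum lam phi k" unfolding B_def wsum_def by simp
    have Lk: "wsum lam phi k \<le> mu ! k" using L[OF k] pk by simp
    obtain S where S: "S \<subseteq> B" "wsum lam phi k - (mu ! k - lam ! 0) \<le> sum (nth lam) S"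
      "sum (nth lam) S \<le> lam ! 0"
    proof (cases "wsum lam phi k \<le> lam ! 0")
      case True
      then show ?thesis using that[of B] sB by simp
    next
      case False
      have "\<exists>S\<subseteq>B. sum (nth lam) S = lam ! 0"
        apply (rule subset_sum[OF ch finB])
        subgoal unfolding B_def by auto
        subgoal unfolding B_def using ch unfolding dchain_def by blast
        subgoal using False sB by simp
        done
      then obtain S where "S \<subseteq> B" "sum (nth lam) S = lam ! 0" by blast
      then show ?thesis using that[of S] Lk le by simp
    qed
    define g where "g i = (if i \<in> S then p else phi i)" for i
    have finS: "finite S" using S(1) finB finite_subset by blast
    show ?thesis
    proof (rule tl_embeds)
      show "\<forall>i. 0 < i \<and> i < length lam \<longrightarrow> g i < length (mu[k := mu ! k - lam ! 0])"
        using ph1 p unfolding g_def by auto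
      show "\<forall>j<length (mu[k := mu ! k - lam ! 0]). wsum lam g j \<le> mu[k := mu ! k - lam ! 0] ! j"
      proof (intro allI impI)
        fix j assume "j < length (mu[k := mu ! k - lam ! 0])"
        then have j: "j < length mu" by simp
        show "wsum lam g j \<le> mu[k := mu ! k - lam ! 0] ! j"
        proof (cases "j = k")
          case True
          have "{i. 0 < i \<and> i < length lam \<and> g i = j} = B - S"
            using True pk S(1) unfolding g_def B_def by auto
          then have "wsum lam g j = sum (nth lam) B - sum (nth lam) S"
            unfolding wsum_def using sum_diff_nat[OF finS S(1)] by simp
          then show ?thesis using True sB S Lk le k by simp
        next
          case jk: False
          show ?thesis
          proof (cases "j = p")
            case True
            have "{i. 0 < i \<and> i < length lam \<and> g i = j} = {i. 0 < i \<and> i < length lam \<and> phi i = j} \<union> S"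
              using True pk S(1) unfolding g_def B_def by auto
            moreover have "{i. 0 < i \<and> i < length lam \<and> phi i = j} \<inter> S = {}"
              using True pk S(1) unfolding B_def by auto
            ultimately have "wsum lam g j = wsum lam phi j + sum (nth lam) S"
              unfolding wsum_def using finS by (simp add: sum.union_disjoint)
            then show ?thesis using L[OF j] True jk S(3) by simp
          next
            case False
            have "{i. 0 < i \<and> i < length lam \<and> g i = j} = {i. 0 < i \<and> i < length lam \<and> phi i = j}"
              using False jk pk S(1) unfolding g_def B_def by auto
            then have "wsum lam g j = wsum lam phi j" unfolding wsum_def by simp
            then show ?thesis using L[OF j] False jk by simp
          qed
        qed
      qed
    qed
  qed
qed

lemma load_Suc:
  "load lam phi (Suc n) j = load lam phi n j + (if phi n = j then lam ! n else 0)"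
proof (cases "phi n = j")
  case True
  then have "{i. i < Suc n \<and> phi i = j} = insert n {i. i < n \<and> phi i = j}" by auto
  then show ?thesis unfolding load_def using True by simp
next
  case False
  then have "{i. i < Suc n \<and> phi i = j} = {i. i < n \<and> phi i = j}" using False by (auto simp: less_Suc_eq)
  then show ?thesis unfolding load_def using False by simp
qed

lemma dchain_drop: "dchain lam \<Longrightarrow> dchain (drop n lam)"
  unfolding dchain_def by auto

lemma residual:
  assumes ch: "dchain lam" and em: "embeds lam mu"
  shows "first_fit_run lam mu phi n \<Longrightarrow> n \<le> length lam \<Longrightarrow>
    embeds (drop n lam) (map (\<lambda>j. mu ! j - load lam phi n j) [0..<length mu])"
proof (induction n)
  case 0
  have "map (\<lambda>j. mu ! j - load lam phi 0 j) [0..<length mu] = mu"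
    by (rule nth_equalityI) (auto simp: load_def)
  then show ?case using em by simp
next
  case (Suc n)
  have run: "first_fit_run lam mu phi n" using Suc.prems unfolding first_fit_run_def by auto
  have IH: "embeds (drop n lam) (map (\<lambda>j. mu ! j - load lam phi n j) [0..<length mu])"
    using Suc.IH run Suc.prems by simp
  define k where "k = phi n"
  have k: "k < length mu" and kf: "lam ! n + load lam phi n k \<le> mu ! k"
    using Suc.prems unfolding first_fit_run_def k_def by auto
  define r where "r = map (\<lambda>j. mu ! j - load lam phi n j) [0..<length mu]"
  have ne: "drop n lam \<noteq> []" using Suc.prems by simp
  have h0: "drop n lam ! 0 = lam ! n" using Suc.prems by simp
  have "embeds (tl (drop n lam)) (r[k := r ! k - drop n lam ! 0])"
    apply (rule keylemma[OF dchain_drop[OF ch] ne])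
    using IH k kf h0 unfolding r_def by auto
  moreover have "tl (drop n lam) = drop (Suc n) lam" by (simp add: drop_Suc tl_drop)
  moreover have "r[k := r ! k - drop n lam ! 0] = map (\<lambda>j. mu ! j - load lam phi (Suc n) j) [0..<length mu]"
    by (rule nth_equalityI) (auto simp: r_def h0 k load_Suc k_def nth_list_update)
  ultimately show ?case unfolding r_def by simp
qed

theorem theorem3p1:
  fixes lam mu :: "nat list"
  assumes "integral_partition lam" and "integral_partition mu"
    and "\<And>i j. i < length lam \<Longrightarrow> j \<le> i \<Longrightarrow> lam ! i dvd lam ! j"
    and "embeds lam mu"
  shows "(\<forall>n < length lam. \<forall>phi. first_fit_run lam mu phi n \<longrightarrow>
            (\<exists>j < length mu. lam ! n + load lam phi n j \<le> mu ! j))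
       \<and> (lam \<noteq> [] \<longrightarrow> (\<forall>k < length mu. lam ! 0 \<le> mu ! k \<longrightarrow>
            embeds (tl lam) (mu[k := mu ! k - lam ! 0])))"
proof
  have ch: "dchain lam" using assms(3) unfolding dchain_def by blast
  show "\<forall>n < length lam. \<forall>phi. first_fit_run lam mu phi n \<longrightarrow>
            (\<exists>j < length mu. lam ! n + load lam phi n j \<le> mu ! j)"
  proof (intro allI impI)
    fix n phi assume n: "n < length lam" and run: "first_fit_run lam mu phi n"
    have "embeds (drop n lam) (map (\<lambda>j. mu ! j - load lam phi n j) [0..<length mu])"
      using residual[OF ch assms(4) run] n by simp
    then obtain psi where ps1: "\<forall>i < length (drop n lam). psi i < length mu"
      and ps2: "\<forall>j < length mu. load (drop n lam) psi (length (drop n lam)) j \<le> mu ! j - load lam phi n j"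
      unfolding embeds_def by fastforce
    define j where "j = psi 0"
    have j: "j < length mu" using ps1 n unfolding j_def by simp
    have "drop n lam ! 0 \<le> load (drop n lam) psi (length (drop n lam)) j"
      unfolding load_def j_def by (rule member_le_sum) (use n in auto)
    moreover have "drop n lam ! 0 = lam ! n" using n by simp
    moreover have "load (drop n lam) psi (length (drop n lam)) j \<le> mu ! j - load lam phi n j"
      using ps2 j by blast
    ultimately have "lam ! n \<le> mu ! j - load lam phi n j" by linarith
    moreover have "lam ! n > 0" using assms(1) n unfolding integral_partition_def by auto
    ultimately have "lam ! n + load lam phi n j \<le> mu ! j" by linarith
    then show "\<exists>j < length mu. lam ! n + load lam phi n j \<le> mu ! j" using j by blast
  qed
  show "lam \<noteq> [] \<longrightarrow> (\<forall>k < length mu. lam ! 0 \<le> mu ! k \<longrightarrow>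
            embeds (tl lam) (mu[k := mu ! k - lam ! 0]))"
  proof (intro impI allI)
    fix k assume "lam \<noteq> []" "k < length mu" "lam ! 0 \<le> mu ! k"
    then show "embeds (tl lam) (mu[k := mu ! k - lam ! 0])"
      using keylemma[OF ch _ assms(4)] by blast
  qed
qed

end
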